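(* Let $G$ be a finite transitive permutation group, let $p$ be a prime, and suppose that a point stabiliser $H=G_\alpha$ contains a quasi-semiregular $p$-element. Then: (1) $H$ contains a Sylow $p$-subgroup of $G$; (2) if $S$ is a Sylow $p$-subgroup of $G$ contained in $H$, then $N_G(S)\le N_G(H)$; (3) if moreover $N_G(H)=H$, then $N_G(S)=N_H(S)$.
   Context: A permutation $g$ is quasi-semiregular if $\langle g\rangle$ has a unique fixed point and acts semiregularly (only the identity fixes a point) on the remaining points. *)

theory Defs
  imports "HOL-Algebra.Algebra" "HOL-Computational_Algebra.Primes"
begin

definition cyc_fix :: "('g, 'c) monoid_scheme \<Rightarrow> ('g \<Rightarrow> 'b \<Rightarrow> 'b) \<Rightarrow> 'b set \<Rightarrow> 'g \<Rightarrow> 'b set" where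
  "cyc_fix G \<phi> E g = {x \<in> E. \<forall>h \<in> generate G {g}. \<phi> h x = x}"

definition quasi_semiregular :: "('g, 'c) monoid_scheme \<Rightarrow> ('g \<Rightarrow> 'b \<Rightarrow> 'b) \<Rightarrow> 'b set \<Rightarrow> 'g \<Rightarrow> bool" where
  "quasi_semiregular G \<phi> E g \<longleftrightarrow>
     (\<exists>a. cyc_fix G \<phi> E g = {a} \<and>
          (\<forall>x \<in> E - {a}. \<forall>h \<in> generate G {g}. \<phi> h x = x \<longrightarrow> h = \<one>\<^bsub>G\<^esub>))"

definition p_element :: "('g, 'c) monoid_scheme \<Rightarrow> nat \<Rightarrow> 'g \<Rightarrow> bool" where
  "p_element G p g \<longleftrightarrow> g \<in> carrier G \<and> (\<exists>k. group.ord G g = p ^ k)"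

definition sylow_subgroup :: "('g, 'c) monoid_scheme \<Rightarrow> nat \<Rightarrow> 'g set \<Rightarrow> bool" where
  "sylow_subgroup G p S \<longleftrightarrow> subgroup S G \<and> card S = p ^ Factorial_Ring.multiplicity p (card (carrier G))"

end

theory Submission
  imports Defs
begin
lemma (in group_action) one_act: "x \<in> E \<Longrightarrow> \<phi> \<one>\<^bsub>G\<^esub> x = x"
  by (metis id_eq_one restrict_apply')

lemma (in group_action) inv_act:
  assumes "x \<in> E" "h \<in> carrier G" shows "\<phi> (inv\<^bsub>G\<^esub> h) (\<phi> h x) = x"
proof -
  have "group G" using group_hom group_hom.axioms(1) by blast
  then show ?thesis using assms composition_rule[of x "inv\<^bsub>G\<^esub> h" h] one_act
    by (simp add: group.l_inv group.inv_closed)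
qed

lemma (in group_action) semireg_dvd:
  assumes P: "subgroup P G" and fP: "finite P"
    and "Y \<subseteq> E" "finite Y"
    and cl: "\<forall>x\<in>Y. \<forall>h\<in>P. \<phi> h x \<in> Y"
    and sr: "\<forall>x\<in>Y. \<forall>h\<in>P. \<phi> h x = x \<longrightarrow> h = \<one>\<^bsub>G\<^esub>"
  shows "card P dvd card Y"
  using assms(3-6)
proof (induction "card Y" arbitrary: Y rule: less_induct)
  case less
  have grp: "group G" using group_hom group_hom.axioms(1) by blast
  have PG: "P \<subseteq> carrier G" using P subgroup.subset by blast
  show ?case
  proof (cases "Y = {}")
    case True then show ?thesis by simp
  next
    case False
    then obtain x where x: "x \<in> Y" by blast
    have xE: "x \<in> E" using x less.prems by blast
    define Orb where "Orb = (\<lambda>h. \<phi> h x) ` P"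
    have inj: "inj_on (\<lambda>h. \<phi> h x) P"
    proof (rule inj_onI)
      fix h h' assume h: "h \<in> P" "h' \<in> P" "\<phi> h x = \<phi> h' x"
      have "\<phi> (inv\<^bsub>G\<^esub> h' \<otimes>\<^bsub>G\<^esub> h) x = \<phi> (inv\<^bsub>G\<^esub> h') (\<phi> h' x)"
        using h composition_rule[OF xE] PG grp group.inv_closed by (metis subsetD)
      also have "\<dots> = x" using inv_act xE h PG by blast
      finally have "inv\<^bsub>G\<^esub> h' \<otimes>\<^bsub>G\<^esub> h = \<one>\<^bsub>G\<^esub>"
        using sr x h P by (meson less.prems subgroup.m_closed subgroup.m_inv_closed)
      then show "h = h'" using grp h PG
        by (metis group.inv_equality group.inv_inv group.inv_closed subsetD group.l_inv)
    qed
    have cO: "card Orb = card P" unfolding Orb_def using inj card_image by blast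
    have OY: "Orb \<subseteq> Y" unfolding Orb_def using less.prems x by blast
    have "Orb \<noteq> {}" unfolding Orb_def using P subgroup.one_closed by blast
    then have lt: "card (Y - Orb) < card Y"
      using OY less.prems by (metis Diff_subset card_seteq finite_subset psubsetI
          psubset_card_mono Diff_eq_empty_iff Diff_Diff_Int inf.absorb2)
    have "card P dvd card (Y - Orb)"
    proof (rule less.hyps[OF lt])
      show "Y - Orb \<subseteq> E" "finite (Y - Orb)" using less.prems by auto
      show "\<forall>y\<in>Y - Orb. \<forall>h\<in>P. \<phi> h y \<in> Y - Orb"
      proof (intro ballI)
        fix y h assume y: "y \<in> Y - Orb" and h: "h \<in> P"
        have "\<phi> h y \<in> Y" using less.prems y h by blast
        moreover have "\<phi> h y \<notin> Orb"
        proof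
          assume "\<phi> h y \<in> Orb"
          then obtain k where k: "k \<in> P" "\<phi> h y = \<phi> k x" unfolding Orb_def by blast
          have yE: "y \<in> E" using y less.prems by blast
          have "y = \<phi> (inv\<^bsub>G\<^esub> h) (\<phi> h y)" using inv_act yE h PG by auto
          also have "\<dots> = \<phi> (inv\<^bsub>G\<^esub> h \<otimes>\<^bsub>G\<^esub> k) x"
            using k composition_rule[OF xE] PG grp group.inv_closed h by (metis subsetD)
          finally have "y \<in> Orb" unfolding Orb_def using h k P
            by (meson image_eqI subgroup.m_closed subgroup.m_inv_closed)
          then show False using y by blast
        qed
        ultimately show "\<phi> h y \<in> Y - Orb" by blast
      qed
      show "\<forall>y\<in>Y - Orb. \<forall>h\<in>P. \<phi> h y = y \<longrightarrow> h = \<one>\<^bsub>G\<^esub>" using less.prems by blast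
    qed
    moreover have "card Y = card Orb + card (Y - Orb)"
      using OY less.prems by (metis card_Diff_subset finite_subset card_mono le_add_diff_inverse)
    ultimately show ?thesis using cO by simp
  qed
qed



locale qsr_ctx =
  fixes G :: "('g, 'c) monoid_scheme" and \<phi> :: "'g \<Rightarrow> 'b \<Rightarrow> 'b" and \<Omega> :: "'b set"
    and p :: nat and \<alpha> :: 'b and H :: "'g set" and g :: 'g
  assumes grp: "group G" and fin: "finite (carrier G)"
    and tr: "transitive_action G \<Omega> \<phi>"
    and pr: "Factorial_Ring.prime p" and aO: "\<alpha> \<in> \<Omega>"
    and H_def: "H = stabilizer G \<phi> \<alpha>"
    and gH: "g \<in> H" and pe: "p_element G p g" and qs: "quasi_semiregular G \<phi> \<Omega> g"
begin

sublocale group G by (rule grp)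
sublocale GA: transitive_action G \<Omega> \<phi> by (rule tr)

definition P where "P = generate G {g}"
definition n where "n = multiplicity p (order G)"

lemma p1: "p > 1" using pr prime_gt_1_nat by blast
lemma Hsub: "subgroup H G" unfolding H_def using GA.stabilizer_subgroup aO .
lemma HG: "H \<subseteq> carrier G" using Hsub subgroup.subset by blast
lemma Hfix: "h \<in> H \<Longrightarrow> \<phi> h \<alpha> = \<alpha>" unfolding H_def stabilizer_def by blast
lemma OmG: "orbit G \<phi> \<alpha> = \<Omega>"
  using GA.unique_orbit aO GA.element_image unfolding orbit_def by blast
lemma finO: "finite \<Omega>"
proof -
  have "\<Omega> = (\<lambda>h. \<phi> h \<alpha>) ` carrier G" using OmG unfolding orbit_def by blast
  then show ?thesis using fin by simp
qed
lemma gG: "g \<in> carrier G" using pe unfolding p_element_def by blast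
lemma ordg: "\<exists>k. ord g = p ^ k" using pe unfolding p_element_def by blast
lemma Psub: "subgroup P G" unfolding P_def using generate_is_subgroup gG by blast
lemma PH: "P \<subseteq> H" unfolding P_def using generate_subgroup_incl Hsub gH by blast
lemma finP: "finite P" using Psub fin subgroup.subset finite_subset by blast
lemma cardP: "\<exists>k. card P = p ^ k" unfolding P_def using generate_pow_card gG ordg by simp
lemma cf_sr: "cyc_fix G \<phi> \<Omega> g = {\<alpha>} \<and> (\<forall>x \<in> \<Omega> - {\<alpha>}. \<forall>h \<in> P. \<phi> h x = x \<longrightarrow> h = \<one>\<^bsub>G\<^esub>)"
proof -
  obtain a where cf: "cyc_fix G \<phi> \<Omega> g = {a}"
    and sr0: "\<forall>x \<in> \<Omega> - {a}. \<forall>h \<in> P. \<phi> h x = x \<longrightarrow> h = \<one>\<^bsub>G\<^esub>"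
    using qs unfolding quasi_semiregular_def P_def by blast
  have "\<alpha> \<in> cyc_fix G \<phi> \<Omega> g" unfolding cyc_fix_def using aO PH Hfix P_def by blast
  then have aa: "a = \<alpha>" using cf by simp
  show ?thesis using cf sr0 aa by simp
qed
lemma sr0: "\<forall>x \<in> \<Omega> - {\<alpha>}. \<forall>h \<in> P. \<phi> h x = x \<longrightarrow> h = \<one>\<^bsub>G\<^esub>" using cf_sr by blast
lemma nf: "y \<in> \<Omega> - {\<alpha>} \<Longrightarrow> \<exists>h\<in>P. \<phi> h y \<noteq> y"
  using cf_sr unfolding cyc_fix_def P_def by blast

lemma key: assumes Y: "Y \<subseteq> \<Omega> - {\<alpha>}" "Y \<noteq> {}" "\<forall>y\<in>Y. \<forall>h\<in>P. \<phi> h y \<in> Y"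
  shows "p dvd card Y"
proof -
  obtain k where cardPk: "card P = p ^ k" using cardP by blast
  have fY: "finite Y" using Y finO finite_subset by blast
  have "card P dvd card Y"
  proof (rule GA.semireg_dvd[OF Psub finP _ fY])
    show "Y \<subseteq> \<Omega>" using Y by blast
    show "\<forall>x\<in>Y. \<forall>h\<in>P. \<phi> h x \<in> Y" using Y by blast
    show "\<forall>x\<in>Y. \<forall>h\<in>P. \<phi> h x = x \<longrightarrow> h = \<one>\<^bsub>G\<^esub>" using Y sr0 by blast
  qed
  moreover have "k \<noteq> 0"
  proof
    assume "k = 0"
    then have "card P = 1" using cardPk by simp
    then obtain z where "P = {z}" using card_1_singletonE by blast
    moreover have "\<one>\<^bsub>G\<^esub> \<in> P" by (rule subgroup.one_closed[OF Psub])
    ultimately have P1: "P = {\<one>\<^bsub>G\<^esub>}" by simp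
    obtain y where "y \<in> Y" using Y by blast
    moreover have yO: "y \<in> \<Omega> - {\<alpha>}" using \<open>y \<in> Y\<close> Y(1) by blast
    ultimately obtain h where h: "h \<in> P" "\<phi> h y \<noteq> y" using nf by blast
    have "h = \<one>\<^bsub>G\<^esub>" using h(1) P1 by simp
    then show False using h(2) GA.one_act yO by simp
  qed
  then have "p dvd card P" using cardPk by simp
  ultimately show ?thesis using dvd_trans by blast
qed

lemma clos: "\<forall>y\<in>\<Omega> - {\<alpha>}. \<forall>h\<in>P. \<phi> h y \<in> \<Omega> - {\<alpha>}"
proof (intro ballI)
  fix y h assume y: "y \<in> \<Omega> - {\<alpha>}" and h: "h \<in> P"
  have hH: "h \<in> H" using h PH by blast
  have hG: "h \<in> carrier G" using hH HG by blast
  have "\<phi> h y \<in> \<Omega>" using GA.element_image hG y by blast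
  moreover have "\<phi> h y \<noteq> \<alpha>"
  proof
    assume e: "\<phi> h y = \<alpha>"
    have "y = \<phi> (inv\<^bsub>G\<^esub> h) (\<phi> h y)" using GA.inv_act y hG by simp
    also have "\<dots> = \<alpha>" using e Hfix hH Hsub subgroup.m_inv_closed by metis
    finally show False using y by blast
  qed
  ultimately show "\<phi> h y \<in> \<Omega> - {\<alpha>}" by blast
qed

lemma ndvd: "\<not> p dvd card \<Omega>"
proof (cases "\<Omega> - {\<alpha>} = {}")
  case True
  then have "\<Omega> = {\<alpha>}" using aO by blast
  then show ?thesis using p1 by simp
next
  case False
  then have "p dvd card (\<Omega> - {\<alpha>})" using key clos by blast
  moreover have "card \<Omega> = card (\<Omega> - {\<alpha>}) + 1"
  proof -
    have "card \<Omega> > 0" using finO aO card_gt_0_iff by blast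
    then show ?thesis using card_Diff_singleton[OF aO] by simp
  qed
  ultimately have "p dvd card \<Omega> \<longleftrightarrow> p dvd 1" using dvd_add_right_iff by metis
  then show ?thesis using p1 by simp
qed

lemma os: "card \<Omega> * card H = order G"
  using GA.orbit_stabilizer_theorem[OF aO] OmG H_def by simp
lemma ordpos: "order G \<noteq> 0" using fin one_closed unfolding order_def
  by (metis card_0_eq empty_iff)
lemma grpH: "group (G\<lparr>carrier := H\<rparr>)" using subgroup_imp_group Hsub by blast

lemma pn_dvd: "p ^ n dvd card H"
proof -
  have "card \<Omega> * card H \<noteq> 0" using os ordpos by simp
  then have cO0: "card \<Omega> \<noteq> 0" and cH0: "card H \<noteq> 0" by simp_all
  have "n = multiplicity p (card \<Omega>) + multiplicity p (card H)"
    unfolding n_def os[symmetric]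
    using prime_elem_multiplicity_mult_distrib[of p "card \<Omega>" "card H"] pr cO0 cH0 by simp
  also have "multiplicity p (card \<Omega>) = 0" using not_dvd_imp_multiplicity_0 ndvd by blast
  finally show "p ^ n dvd card H" using multiplicity_dvd by simp
qed

lemma part1: "\<exists>S. sylow_subgroup G p S \<and> S \<subseteq> H"
proof -
  obtain m where cHm: "card H = p ^ n * m" using pn_dvd by blast
  have finH: "finite H" using HG fin finite_subset by blast
  obtain S0 where S0: "subgroup S0 (G\<lparr>carrier := H\<rparr>)" "card S0 = p ^ n"
    using sylow_thm[of p "G\<lparr>carrier := H\<rparr>" n m] pr grpH cHm finH by (auto simp: order_def)
  have S0H: "S0 \<subseteq> H" using subgroup.subset[OF S0(1)] by simp
  have "group (G\<lparr>carrier := S0\<rparr>)" using group.subgroup_imp_group[OF grpH S0(1)] by simp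
  then have "subgroup S0 G" using group_incl_imp_subgroup S0H HG by blast
  then show ?thesis
    using S0 S0H unfolding sylow_subgroup_def n_def order_def by blast
qed

lemma noB: assumes S: "sylow_subgroup G p S" "S \<subseteq> H" and b: "\<beta> \<in> \<Omega>" "\<beta> \<noteq> \<alpha>"
    and Sb: "S \<subseteq> stabilizer G \<phi> \<beta>"
  shows False
proof -
  have SG: "subgroup S G" and cS: "card S = p ^ n"
    using S unfolding sylow_subgroup_def n_def order_def by auto
  have "group_hom (G\<lparr>carrier := H\<rparr>) (BijGroup \<Omega>) \<phi>"
    using group_hom.induced_group_hom'[OF GA.group_hom Hsub] .
  then have GHa: "group_action (G\<lparr>carrier := H\<rparr>) \<Omega> \<phi>" unfolding group_action_def .
  define Y where "Y = orbit (G\<lparr>carrier := H\<rparr>) \<phi> \<beta>"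
  define K where "K = stabilizer (G\<lparr>carrier := H\<rparr>) \<phi> \<beta>"
  have osH: "card Y * card K = card H"
    using group_action.orbit_stabilizer_theorem[OF GHa b(1)] unfolding Y_def K_def order_def by simp
  have Yeq: "Y = {\<phi> h \<beta> | h. h \<in> H}" unfolding Y_def orbit_def by simp
  have Ymem: "\<And>y. y \<in> Y \<longleftrightarrow> (\<exists>h. y = \<phi> h \<beta> \<and> h \<in> H)" by (simp add: Yeq)
  have Keq: "K = {h \<in> H. \<phi> h \<beta> = \<beta>}" unfolding K_def stabilizer_def by simp
  have "p dvd card Y"
  proof (rule key)
    show "Y \<subseteq> \<Omega> - {\<alpha>}"
    proof
      fix y assume "y \<in> Y"
      then have "\<exists>h. y = \<phi> h \<beta> \<and> h \<in> H" using Ymem[of y] by simp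
      then obtain h where h: "h \<in> H" "y = \<phi> h \<beta>" by blast
      have hG: "h \<in> carrier G" using h HG by blast
      have "y \<in> \<Omega>" using GA.element_image[OF hG b(1) h(2)[symmetric]] .
      moreover have "y \<noteq> \<alpha>"
      proof
        assume e: "y = \<alpha>"
        from h(2)[symmetric] e have e2: "\<phi> h \<beta> = \<alpha>" by (rule trans)
        have "\<beta> = \<phi> (inv\<^bsub>G\<^esub> h) (\<phi> h \<beta>)" using GA.inv_act[OF b(1) hG] by (rule sym)
        also have "\<dots> = \<phi> (inv\<^bsub>G\<^esub> h) \<alpha>" by (simp only: e2)
        also have "\<dots> = \<alpha>" using Hfix[OF subgroup.m_inv_closed[OF Hsub h(1)]] .
        finally show False using b by blast
      qed
      ultimately show "y \<in> \<Omega> - {\<alpha>}" by blast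
    qed
    have "\<one>\<^bsub>G\<^esub> \<in> H" using Hsub subgroup.one_closed by blast
    then have "\<phi> \<one>\<^bsub>G\<^esub> \<beta> \<in> Y" using Ymem[THEN iffD2, OF exI[of _ "\<one>\<^bsub>G\<^esub>"]] by simp
    then show "Y \<noteq> {}" by blast
    show "\<forall>y\<in>Y. \<forall>h\<in>P. \<phi> h y \<in> Y"
    proof (intro ballI)
      fix y h assume y: "y \<in> Y" and h: "h \<in> P"
      have "\<exists>k. y = \<phi> k \<beta> \<and> k \<in> H" using Ymem[of y] y by simp
      then obtain k where k: "k \<in> H" "y = \<phi> k \<beta>" by blast
      have hH: "h \<in> H" using h PH by blast
      have hkG: "h \<in> carrier G" "k \<in> carrier G" using k(1) hH HG by blast+
      have "\<phi> h y = \<phi> (h \<otimes>\<^bsub>G\<^esub> k) \<beta>" using GA.composition_rule[OF b(1) hkG] k(2) by simp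
      moreover have "h \<otimes>\<^bsub>G\<^esub> k \<in> H" using subgroup.m_closed[OF Hsub hH k(1)] .
      ultimately show "\<phi> h y \<in> Y" using Ymem[THEN iffD2, OF exI[of _ "h \<otimes>\<^bsub>G\<^esub> k"]] by simp
    qed
  qed
  have "subgroup K (G\<lparr>carrier := H\<rparr>)" unfolding K_def using group_action.stabilizer_subgroup[OF GHa b(1)] .
  moreover have KH: "K \<subseteq> H" unfolding Keq by blast
  ultimately have "group (G\<lparr>carrier := H\<rparr>\<lparr>carrier := K\<rparr>)" using group.subgroup_imp_group[OF grpH] by blast
  then have "group (G\<lparr>carrier := K\<rparr>)" by simp
  then have KG: "subgroup K G" using group_incl_imp_subgroup KH HG by blast
  have SK: "S \<subseteq> K" using S(2) Sb unfolding Keq stabilizer_def by blast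
  have "subgroup S (G\<lparr>carrier := K\<rparr>)" using subgroup_incl SG KG SK by blast
  then have "card (rcosets\<^bsub>G\<lparr>carrier := K\<rparr>\<^esub> S) * card S = card K"
    using group.lagrange[OF \<open>group (G\<lparr>carrier := K\<rparr>)\<close>] unfolding order_def by simp
  then have "card S dvd card K" by (metis dvd_triv_right)
  then have "p ^ n dvd card K" using cS by simp
  with \<open>p dvd card Y\<close> have "p * p ^ n dvd card Y * card K" using mult_dvd_mono by blast
  then have "p ^ Suc n dvd card H" using osH by simp
  moreover have "card H dvd order G" by (subst lagrange[OF Hsub, symmetric]) (rule dvd_triv_right)
  ultimately have "p ^ Suc n dvd order G" by (rule dvd_trans)
  moreover have nu: "\<not> is_unit p" using p1 by simp
  ultimately have "Suc n \<le> n" unfolding n_def using multiplicity_geI[OF ordpos nu] by blast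
  then show False by simp
qed

lemma normS: assumes S: "sylow_subgroup G p S" "S \<subseteq> H" shows "normalizer G S \<subseteq> H"
proof
  fix x assume x: "x \<in> normalizer G S"
  have SG: "S \<subseteq> carrier G" using S HG by blast
  have xG: "x \<in> carrier G" and xS: "x <#\<^bsub>G\<^esub> S #>\<^bsub>G\<^esub> inv\<^bsub>G\<^esub> x = S"
    using x SG unfolding normalizer_def stabilizer_def by auto
  define \<beta> where "\<beta> = \<phi> x \<alpha>"
  have bO: "\<beta> \<in> \<Omega>" unfolding \<beta>_def using GA.element_image xG aO by blast
  have "S \<subseteq> stabilizer G \<phi> \<beta>"
  proof
    fix s assume s: "s \<in> S"
    then have "s \<in> x <#\<^bsub>G\<^esub> S #>\<^bsub>G\<^esub> inv\<^bsub>G\<^esub> x" using xS by simp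
    then obtain s' where s': "s' \<in> S" "s = x \<otimes>\<^bsub>G\<^esub> s' \<otimes>\<^bsub>G\<^esub> inv\<^bsub>G\<^esub> x"
      unfolding l_coset_def r_coset_def by auto
    have s'G: "s' \<in> carrier G" using s' SG by blast
    have s'H: "s' \<in> H" using s' S by blast
    have "\<phi> s \<beta> = \<phi> (x \<otimes>\<^bsub>G\<^esub> s') (\<phi> (inv\<^bsub>G\<^esub> x) (\<phi> x \<alpha>))"
      unfolding \<beta>_def s'(2) using GA.composition_rule bO xG s'G \<beta>_def by simp
    also have "\<dots> = \<phi> (x \<otimes>\<^bsub>G\<^esub> s') \<alpha>" using GA.inv_act aO xG by simp
    also have "\<dots> = \<phi> x (\<phi> s' \<alpha>)" using GA.composition_rule aO xG s'G by simp
    also have "\<dots> = \<beta>" using Hfix s'H \<beta>_def by simp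
    finally show "s \<in> stabilizer G \<phi> \<beta>" unfolding stabilizer_def using s SG by blast
  qed
  then have "\<beta> = \<alpha>" using noB S bO by blast
  then show "x \<in> H" unfolding H_def stabilizer_def using xG \<beta>_def by simp
qed

lemma HN: "H \<subseteq> normalizer G H"
  using subgroup.subset[OF normal_imp_subgroup[OF subgroup_in_normalizer[OF Hsub]]] by simp

end

theorem lemma2p3:
  fixes G :: "('g, 'c) monoid_scheme" and \<phi> :: "'g \<Rightarrow> 'b \<Rightarrow> 'b" and \<Omega> :: "'b set"
    and p :: nat and \<alpha> :: 'b and H :: "'g set"
  assumes "group G" and "finite (carrier G)"
    and "faithful_action G \<Omega> \<phi>" and "transitive_action G \<Omega> \<phi>"
    and "Factorial_Ring.prime p" and "\<alpha> \<in> \<Omega>"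
    and H_def: "H = stabilizer G \<phi> \<alpha>"
    and "\<exists>g \<in> H. p_element G p g \<and> quasi_semiregular G \<phi> \<Omega> g"
  shows "(\<exists>S. sylow_subgroup G p S \<and> S \<subseteq> H)
    \<and> (\<forall>S. sylow_subgroup G p S \<and> S \<subseteq> H \<longrightarrow> normalizer G S \<subseteq> normalizer G H)
    \<and> (normalizer G H = H \<longrightarrow>
         (\<forall>S. sylow_subgroup G p S \<and> S \<subseteq> H \<longrightarrow> normalizer G S = normalizer G S \<inter> H))"
proof -
  obtain g where gH: "g \<in> H" and pe: "p_element G p g" and qs: "quasi_semiregular G \<phi> \<Omega> g"
    using assms(8) by blast
  have Q: "qsr_ctx G \<phi> \<Omega> p \<alpha> H g"
    unfolding qsr_ctx_def using assms(1,2,4,5,6,7) gH pe qs by blast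
  have part2: "\<forall>S. sylow_subgroup G p S \<and> S \<subseteq> H \<longrightarrow> normalizer G S \<subseteq> normalizer G H"
  proof (intro allI impI)
    fix S assume "sylow_subgroup G p S \<and> S \<subseteq> H"
    then have "normalizer G S \<subseteq> H" using qsr_ctx.normS[OF Q] by blast
    then show "normalizer G S \<subseteq> normalizer G H" using qsr_ctx.HN[OF Q] by (rule subset_trans)
  qed
  have part3: "\<forall>S. sylow_subgroup G p S \<and> S \<subseteq> H \<longrightarrow> normalizer G S = normalizer G S \<inter> H"
  proof (intro allI impI)
    fix S assume "sylow_subgroup G p S \<and> S \<subseteq> H"
    then have "normalizer G S \<subseteq> H" using qsr_ctx.normS[OF Q] by blast
    then show "normalizer G S = normalizer G S \<inter> H" by (rule Int_absorb2[symmetric])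
  qed
  show ?thesis using qsr_ctx.part1[OF Q] part2 part3 by simp
qed

end
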